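(* Let $G$ be an Abelian group and $(\rho,V)$ a linear representation of $G$ on a finite-dimensional vector space $V$ over a field $k$. Let $A$ be a nonempty finite subset of $G$ and $Y\subset V$ with $\langle Y\rangle\neq\{0\}$ and $\dim(A\cdot Y)\leq\alpha\dim Y$ for some $\alpha\in\mathbb{R}_{\geq0}$. Then there exists a $k$-subspace $Z\neq\{0\}$ of $\langle Y\rangle$ such that $\dim(A^{n}\cdot Z)\leq\alpha^{n}\dim Z$ for every integer $n\geq1$.
   Context: $g\cdot v=\rho(g)v$; $\langle Y\rangle$ is the $k$-span of $Y$ and $\dim Y:=\dim\langle Y\rangle$; for $S\subset G$, $S\cdot Z$ is the $k$-span of $\{s\cdot z\mid s\in S,z\in Z\}$; $A^n=\{a_1\cdots a_n\mid a_i\in A\}$. *)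

theory Defs
  imports Complex_Main "HOL-Algebra.Group"
begin

fun set_pow :: "('g, 'b) monoid_scheme \<Rightarrow> 'g set \<Rightarrow> nat \<Rightarrow> 'g set" where
  "set_pow G A 0 = {\<one>\<^bsub>G\<^esub>}"
| "set_pow G A (Suc n) = {a \<otimes>\<^bsub>G\<^esub> b | a b. a \<in> set_pow G A n \<and> b \<in> A}"

definition act_span :: "('k::field \<Rightarrow> 'v::ab_group_add \<Rightarrow> 'v) \<Rightarrow> ('g \<Rightarrow> 'v \<Rightarrow> 'v) \<Rightarrow> 'g set \<Rightarrow> 'v set \<Rightarrow> 'v set" where
  "act_span scale \<rho> S Z = Modules.module.span scale {\<rho> s z | s z. s \<in> S \<and> z \<in> Z}"

text \<open>(\<rho>, V) is a linear representation of G on V (V = the whole type 'v):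
  each \<rho> g is an invertible k-linear map, and \<rho> is a group homomorphism.\<close>
definition is_representation :: "('g, 'b) monoid_scheme \<Rightarrow> ('k::field \<Rightarrow> 'v::ab_group_add \<Rightarrow> 'v) \<Rightarrow> ('g \<Rightarrow> 'v \<Rightarrow> 'v) \<Rightarrow> bool" where
  "is_representation G scale \<rho> \<longleftrightarrow>
     (\<forall>g\<in>carrier G. Vector_Spaces.linear scale scale (\<rho> g) \<and> bij (\<rho> g)) \<and>
     \<rho> \<one>\<^bsub>G\<^esub> = id \<and>
     (\<forall>g\<in>carrier G. \<forall>h\<in>carrier G. \<rho> (g \<otimes>\<^bsub>G\<^esub> h) = \<rho> g \<circ> \<rho> h)"

end

theory Submission
  imports Defs
begin

locale petr = finite_dimensional_vector_space scale Basis
  for scale :: "'k::field \<Rightarrow> 'v::ab_group_add \<Rightarrow> 'v" and Basis :: "'v set" +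
  fixes G :: "('g, 'b) monoid_scheme" and \<rho> :: "'g \<Rightarrow> 'v \<Rightarrow> 'v"
  assumes cg: "comm_group G" and rep: "is_representation G scale \<rho>"
begin

interpretation fp: finite_dimensional_vector_space_pair_1 scale Basis scale
  by unfold_locales

lemma lin: "g \<in> carrier G \<Longrightarrow> Vector_Spaces.linear scale scale (\<rho> g)"
  using rep unfolding is_representation_def by blast

lemma injr: "g \<in> carrier G \<Longrightarrow> inj (\<rho> g)"
  using rep unfolding is_representation_def bij_def by blast

lemma rho_mult: "g \<in> carrier G \<Longrightarrow> h \<in> carrier G \<Longrightarrow> \<rho> (g \<otimes>\<^bsub>G\<^esub> h) z = \<rho> g (\<rho> h z)"
  using rep unfolding is_representation_def by auto

lemma rho_one: "\<rho> \<one>\<^bsub>G\<^esub> z = z"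
  using rep unfolding is_representation_def by auto

lemma comm: "g \<in> carrier G \<Longrightarrow> h \<in> carrier G \<Longrightarrow> g \<otimes>\<^bsub>G\<^esub> h = h \<otimes>\<^bsub>G\<^esub> g"
proof -
  interpret comm_group G by (rule cg)
  assume "g \<in> carrier G" "h \<in> carrier G" then show ?thesis by (rule m_comm)
qed

lemma closed: "g \<in> carrier G \<Longrightarrow> h \<in> carrier G \<Longrightarrow> g \<otimes>\<^bsub>G\<^esub> h \<in> carrier G"
proof -
  interpret comm_group G by (rule cg)
  assume "g \<in> carrier G" "h \<in> carrier G" then show ?thesis by (rule m_closed)
qed

lemma dim_img: "g \<in> carrier G \<Longrightarrow> dim (\<rho> g ` S) = dim S"
  using fp.dim_image_eq[OF lin] injr by (metis inj_on_subset subset_UNIV)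

lemma img_span: "g \<in> carrier G \<Longrightarrow> \<rho> g ` span S = span (\<rho> g ` S)"
  using fp.linear_span_image[OF lin] by metis

lemma as_sub[simp]: "subspace (act_span scale \<rho> S Z)"
  unfolding act_span_def by simp

lemma img_as: assumes "x \<in> carrier G" "A \<subseteq> carrier G"
  shows "\<rho> x ` act_span scale \<rho> A Z = act_span scale \<rho> {x \<otimes>\<^bsub>G\<^esub> a | a. a \<in> A} Z"
proof -
  have "\<rho> x ` {\<rho> s z | s z. s \<in> A \<and> z \<in> Z} = {\<rho> s z | s z. s \<in> {x \<otimes>\<^bsub>G\<^esub> a | a. a \<in> A} \<and> z \<in> Z}"
  proof (intro equalityI subsetI)
    fix v assume "v \<in> \<rho> x ` {\<rho> s z | s z. s \<in> A \<and> z \<in> Z}"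
    then obtain s z where v: "v = \<rho> x (\<rho> s z)" "s \<in> A" "z \<in> Z" by auto
    then have "v = \<rho> (x \<otimes>\<^bsub>G\<^esub> s) z" using assms rho_mult by auto
    then show "v \<in> {\<rho> s z | s z. s \<in> {x \<otimes>\<^bsub>G\<^esub> a | a. a \<in> A} \<and> z \<in> Z}"
      using v by blast
  next
    fix v assume "v \<in> {\<rho> s z | s z. s \<in> {x \<otimes>\<^bsub>G\<^esub> a | a. a \<in> A} \<and> z \<in> Z}"
    then obtain a z where v: "v = \<rho> (x \<otimes>\<^bsub>G\<^esub> a) z" "a \<in> A" "z \<in> Z" by auto
    then have "v = \<rho> x (\<rho> a z)" using assms rho_mult by auto
    then show "v \<in> \<rho> x ` {\<rho> s z | s z. s \<in> A \<and> z \<in> Z}" using v by blast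
  qed
  then show ?thesis unfolding act_span_def using img_span[OF assms(1)] by metis
qed

lemma as_single: assumes "x \<in> carrier G" "subspace Z"
  shows "act_span scale \<rho> {x} Z = \<rho> x ` Z"
proof -
  have "{\<rho> s z | s z. s \<in> {x} \<and> z \<in> Z} = \<rho> x ` Z" by auto
  moreover have "span (\<rho> x ` Z) = \<rho> x ` Z" by (metis img_span[OF assms(1)] assms(2) span_eq_iff)
  ultimately show ?thesis unfolding act_span_def by simp
qed

lemma as_Un: "act_span scale \<rho> (S \<union> T) Z = {p + q | p q. p \<in> act_span scale \<rho> S Z \<and> q \<in> act_span scale \<rho> T Z}"
proof -
  have "{\<rho> s z | s z. s \<in> S \<union> T \<and> z \<in> Z} = {\<rho> s z | s z. s \<in> S \<and> z \<in> Z} \<union> {\<rho> s z | s z. s \<in> T \<and> z \<in> Z}"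
    by auto
  then show ?thesis unfolding act_span_def using span_Un by metis
qed

lemma petridis:
  fixes A Z K
  assumes A: "A \<subseteq> carrier G" and Zs: "subspace Z" and K0: "K \<ge> 0"
    and KZ: "real (dim (act_span scale \<rho> A Z)) = K * real (dim Z)"
    and Kmin: "\<And>W. subspace W \<Longrightarrow> W \<subseteq> Z \<Longrightarrow> K * real (dim W) \<le> real (dim (act_span scale \<rho> A W))"
    and C: "finite C" "C \<subseteq> carrier G"
  shows "real (dim (act_span scale \<rho> {c \<otimes>\<^bsub>G\<^esub> a | c a. c \<in> C \<and> a \<in> A} Z))
          \<le> K * real (dim (act_span scale \<rho> C Z))"
  using C
proof (induction C rule: finite_induct)
  case empty
  then show ?case by (simp add: act_span_def)
next
  case (insert x C)
  have x: "x \<in> carrier G" and CG: "C \<subseteq> carrier G" using insert by auto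
  define P where "P = act_span scale \<rho> {c \<otimes>\<^bsub>G\<^esub> a | c a. c \<in> C \<and> a \<in> A} Z"
  define Q where "Q = act_span scale \<rho> {x \<otimes>\<^bsub>G\<^esub> a | a. a \<in> A} Z"
  define S where "S = act_span scale \<rho> C Z"
  define T where "T = act_span scale \<rho> {x} Z"
  define W where "W = {z \<in> Z. \<forall>a\<in>A. \<rho> (x \<otimes>\<^bsub>G\<^esub> a) z \<in> P}"
  have IH: "real (dim P) \<le> K * real (dim S)" using insert unfolding P_def S_def by auto
  have "{c \<otimes>\<^bsub>G\<^esub> a | c a. c \<in> insert x C \<and> a \<in> A} =
        {c \<otimes>\<^bsub>G\<^esub> a | c a. c \<in> C \<and> a \<in> A} \<union> {x \<otimes>\<^bsub>G\<^esub> a | a. a \<in> A}" by auto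
  then have P': "act_span scale \<rho> {c \<otimes>\<^bsub>G\<^esub> a | c a. c \<in> insert x C \<and> a \<in> A} Z
      = {p + q | p q. p \<in> P \<and> q \<in> Q}" unfolding P_def Q_def using as_Un by metis
  have S': "act_span scale \<rho> (insert x C) Z = {p + q | p q. p \<in> S \<and> q \<in> T}"
    unfolding S_def T_def using as_Un[of C "{x}"] by (metis Un_commute insert_is_Un)
  have dP: "dim {p + q | p q. p \<in> P \<and> q \<in> Q} + dim (P \<inter> Q) = dim P + dim Q"
    by (rule dim_sums_Int) (auto simp: P_def Q_def)
  have dS: "dim {p + q | p q. p \<in> S \<and> q \<in> T} + dim (S \<inter> T) = dim S + dim T"
    by (rule dim_sums_Int) (auto simp: S_def T_def)
  have Tz: "T = \<rho> x ` Z" unfolding T_def using as_single[OF x Zs] .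
  have dT: "dim T = dim Z" using Tz dim_img[OF x] by simp
  have dQ: "dim Q = dim (act_span scale \<rho> A Z)"
    unfolding Q_def using img_as[OF x A] dim_img[OF x] by metis
  have Ws: "subspace W"
  proof -
    have "W = Z \<inter> (\<Inter>a\<in>A. {z. \<rho> (x \<otimes>\<^bsub>G\<^esub> a) z \<in> P})" unfolding W_def by auto
    moreover have "subspace (\<Inter>a\<in>A. {z. \<rho> (x \<otimes>\<^bsub>G\<^esub> a) z \<in> P})"
    proof (rule subspace_Int)
      fix a assume "a \<in> A"
      then have "x \<otimes>\<^bsub>G\<^esub> a \<in> carrier G" using A x closed by auto
      then show "subspace {z. \<rho> (x \<otimes>\<^bsub>G\<^esub> a) z \<in> P}"
        using fp.linear_subspace_linear_preimage[OF lin] P_def as_sub by blast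
    qed
    ultimately show ?thesis using Zs subspace_inter by simp
  qed
  have WZ: "W \<subseteq> Z" unfolding W_def by auto
  have QW: "act_span scale \<rho> {x \<otimes>\<^bsub>G\<^esub> a | a. a \<in> A} W \<subseteq> P \<inter> Q"
    unfolding act_span_def
  proof (rule span_minimal)
    show "subspace (P \<inter> Q)" by (rule subspace_inter) (auto simp: P_def Q_def)
    show "{\<rho> s z |s z. s \<in> {x \<otimes>\<^bsub>G\<^esub> a |a. a \<in> A} \<and> z \<in> W} \<subseteq> P \<inter> Q"
    proof
      fix v assume "v \<in> {\<rho> s z |s z. s \<in> {x \<otimes>\<^bsub>G\<^esub> a |a. a \<in> A} \<and> z \<in> W}"
      then obtain a z where v: "v = \<rho> (x \<otimes>\<^bsub>G\<^esub> a) z" "a \<in> A" "z \<in> W" by auto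
      then have "v \<in> P" unfolding W_def by auto
      moreover have "v \<in> Q" unfolding Q_def act_span_def
        using v WZ by (intro span_base) blast
      ultimately show "v \<in> P \<inter> Q" by auto
    qed
  qed
  have "K * real (dim W) \<le> real (dim (act_span scale \<rho> A W))" using Kmin Ws WZ by auto
  also have "dim (act_span scale \<rho> A W) = dim (act_span scale \<rho> {x \<otimes>\<^bsub>G\<^esub> a | a. a \<in> A} W)"
    using img_as[OF x A] dim_img[OF x] by metis
  also have "\<dots> \<le> dim (P \<inter> Q)" using QW dim_subset by auto
  finally have dPQ: "K * real (dim W) \<le> real (dim (P \<inter> Q))" by simp
  have ST: "S \<inter> T \<subseteq> \<rho> x ` W"
  proof
    fix v assume v: "v \<in> S \<inter> T"
    then obtain z where z: "z \<in> Z" "v = \<rho> x z" using Tz by auto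
    have "\<forall>a\<in>A. \<rho> (x \<otimes>\<^bsub>G\<^esub> a) z \<in> P"
    proof
      fix a assume a: "a \<in> A"
      then have aG: "a \<in> carrier G" using A by auto
      have "\<rho> (x \<otimes>\<^bsub>G\<^esub> a) z = \<rho> a v" using z comm[OF x aG] rho_mult[OF aG x] by simp
      also have "\<dots> \<in> \<rho> a ` S" using v by auto
      also have "\<rho> a ` S = span (\<rho> a ` {\<rho> s z | s z. s \<in> C \<and> z \<in> Z})"
        unfolding S_def act_span_def using img_span[OF aG] by metis
      also have "\<dots> \<subseteq> P" unfolding P_def act_span_def
      proof (rule span_mono, rule)
        fix u assume "u \<in> \<rho> a ` {\<rho> s z | s z. s \<in> C \<and> z \<in> Z}"
        then obtain c w where u: "u = \<rho> a (\<rho> c w)" "c \<in> C" "w \<in> Z" by auto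
        then have cG: "c \<in> carrier G" using CG by auto
        have "u = \<rho> (c \<otimes>\<^bsub>G\<^esub> a) w" using u comm[OF cG aG] rho_mult[OF aG cG] by simp
        then show "u \<in> {\<rho> s z |s z. s \<in> {c \<otimes>\<^bsub>G\<^esub> a |c a. c \<in> C \<and> a \<in> A} \<and> z \<in> Z}"
          using u a by blast
      qed
      finally show "\<rho> (x \<otimes>\<^bsub>G\<^esub> a) z \<in> P" .
    qed
    then show "v \<in> \<rho> x ` W" using z unfolding W_def by auto
  qed
  have dST: "dim (S \<inter> T) \<le> dim W"
    using dim_subset[OF ST] dim_img[OF x] by simp
  have "real (dim {p + q | p q. p \<in> P \<and> q \<in> Q}) \<le> K * real (dim S) + K * real (dim Z) - K * real (dim W)"
    using dP dQ KZ dPQ IH by linarith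
  also have "\<dots> \<le> K * real (dim {p + q | p q. p \<in> S \<and> q \<in> T})"
  proof -
    have "real (dim S) + real (dim Z) - real (dim W) \<le> real (dim {p + q | p q. p \<in> S \<and> q \<in> T})"
      using dS dT dST by linarith
    from mult_left_mono[OF this K0] show ?thesis by (simp add: algebra_simps)
  qed
  finally show ?case using P' S' by simp
qed

end

theorem mainTheorem19:
  fixes G :: "('g, 'b) monoid_scheme"
    and scale :: "'k::field \<Rightarrow> 'v::ab_group_add \<Rightarrow> 'v"
    and \<rho> :: "'g \<Rightarrow> 'v \<Rightarrow> 'v"
    and A :: "'g set" and Y :: "'v set" and \<alpha> :: real
  assumes "comm_group G"
    and "Vector_Spaces.vector_space scale"
    and "\<exists>B. finite B \<and> Modules.module.span scale B = UNIV"
    and "is_representation G scale \<rho>"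
    and "finite A" and "A \<noteq> {}" and "A \<subseteq> carrier G"
    and "Modules.module.span scale Y \<noteq> {0}"
    and "\<alpha> \<ge> 0"
    and "real (Vector_Spaces.vector_space.dim scale (act_span scale \<rho> A Y))
           \<le> \<alpha> * real (Vector_Spaces.vector_space.dim scale (Modules.module.span scale Y))"
  shows "\<exists>Z. Modules.module.subspace scale Z \<and> Z \<subseteq> Modules.module.span scale Y \<and> Z \<noteq> {0} \<and>
           (\<forall>n::nat. n \<ge> 1 \<longrightarrow>
              real (Vector_Spaces.vector_space.dim scale (act_span scale \<rho> (set_pow G A n) Z))
                \<le> \<alpha> ^ n * real (Vector_Spaces.vector_space.dim scale Z))"
proof -
  interpret vs: vector_space scale by (rule assms(2))
  interpret cg: comm_group G by (rule assms(1))
  obtain B where B: "finite B" "vs.span B = UNIV" using assms(3) by auto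
  obtain B' where B': "B' \<subseteq> B" "vs.independent B'" "B \<subseteq> vs.span B'"
    using vs.basis_exists[of B] by metis
  have finB': "finite B'" using B'(1) B(1) by (rule finite_subset)
  have spB': "vs.span B' = UNIV"
    using B(2) B'(3) vs.span_mono vs.span_span by (metis top.extremum_uniqueI)
  interpret pt: petr scale B' G \<rho>
    by (intro petr.intro finite_dimensional_vector_space.intro finite_dimensional_vector_space_axioms.intro petr_axioms.intro)
      (simp_all add: assms finB' spB' B' vs.vector_space_axioms)
  define ZZ where "ZZ = {Z. vs.subspace Z \<and> Z \<subseteq> vs.span Y \<and> Z \<noteq> {0}}"
  define r where "r Z = real (vs.dim (act_span scale \<rho> A Z)) / real (vs.dim Z)" for Z
  have dpos: "vs.dim Z > 0" if "Z \<in> ZZ" for Z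
  proof -
    have "vs.subspace Z" "Z \<noteq> {0}" using that unfolding ZZ_def by auto
    then have "\<not> Z \<subseteq> {0}" using vs.subspace_0 by auto
    then show ?thesis using pt.dim_eq_0 by (metis gr0I)
  qed
  have fin: "finite (r ` ZZ)"
  proof (rule finite_subset)
    show "r ` ZZ \<subseteq> (\<lambda>(p, q). real p / real q) ` ({..pt.dimension} \<times> {..pt.dimension})"
    proof (rule image_subsetI)
      fix Z assume "Z \<in> ZZ"
      have "r Z = (\<lambda>(p, q). real p / real q) (vs.dim (act_span scale \<rho> A Z), vs.dim Z)"
        unfolding r_def by simp
      moreover have "(vs.dim (act_span scale \<rho> A Z), vs.dim Z) \<in> {..pt.dimension} \<times> {..pt.dimension}"
        using pt.dim_subset_UNIV by simp
      ultimately show "r Z \<in> (\<lambda>(p, q). real p / real q) ` ({..pt.dimension} \<times> {..pt.dimension})"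
        by (rule image_eqI)
    qed
  qed auto
  have YZ: "vs.span Y \<in> ZZ" unfolding ZZ_def using assms(8) by auto
  define K where "K = Min (r ` ZZ)"
  obtain Z where Z: "Z \<in> ZZ" "r Z = K" using Min_in[OF fin] YZ unfolding K_def by (metis empty_iff image_iff)
  have KW: "K \<le> r W" if "W \<in> ZZ" for W unfolding K_def by (rule Min_le[OF fin]) (use that in simp)
  have K0: "K \<ge> 0" using Z(2) unfolding r_def by auto
  have "act_span scale \<rho> A (vs.span Y) \<subseteq> act_span scale \<rho> A Y"
    unfolding act_span_def
  proof (rule vs.span_minimal)
    show "vs.subspace (vs.span {\<rho> s z |s z. s \<in> A \<and> z \<in> Y})" by simp
    show "{\<rho> s z |s z. s \<in> A \<and> z \<in> vs.span Y} \<subseteq> vs.span {\<rho> s z |s z. s \<in> A \<and> z \<in> Y}"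
    proof
      fix v assume "v \<in> {\<rho> s z |s z. s \<in> A \<and> z \<in> vs.span Y}"
      then obtain a z where v: "v = \<rho> a z" "a \<in> A" "z \<in> vs.span Y" by auto
      have aG: "a \<in> carrier G" using v assms(7) by auto
      have "v \<in> \<rho> a ` vs.span Y" using v by auto
      also have "\<dots> = vs.span (\<rho> a ` Y)" using pt.img_span[OF aG] .
      also have "\<dots> \<subseteq> vs.span {\<rho> s z |s z. s \<in> A \<and> z \<in> Y}"
        by (rule vs.span_mono) (use v in auto)
      finally show "v \<in> vs.span {\<rho> s z |s z. s \<in> A \<and> z \<in> Y}" .
    qed
  qed
  then have "vs.dim (act_span scale \<rho> A (vs.span Y)) \<le> vs.dim (act_span scale \<rho> A Y)"
    by (rule pt.dim_subset)
  then have "real (vs.dim (act_span scale \<rho> A (vs.span Y))) \<le> \<alpha> * real (vs.dim (vs.span Y))"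
    using assms(10) by linarith
  then have "r (vs.span Y) \<le> \<alpha>" unfolding r_def using dpos[OF YZ]
    by (simp add: pos_divide_le_eq)
  then have Ka: "K \<le> \<alpha>" using KW[OF YZ] by linarith
  have Zs: "vs.subspace Z" using Z unfolding ZZ_def by auto
  have KZ: "real (vs.dim (act_span scale \<rho> A Z)) = K * real (vs.dim Z)"
  proof -
    have d: "real (vs.dim Z) \<noteq> 0" using dpos[OF Z(1)] by (simp del: pt.dim_eq_0)
    show ?thesis unfolding Z(2)[symmetric] r_def using d by (simp del: pt.dim_eq_0)
  qed
  have Kmin: "K * real (vs.dim W) \<le> real (vs.dim (act_span scale \<rho> A W))"
    if "vs.subspace W" "W \<subseteq> Z" for W
  proof (cases "W = {0}")
    case True then show ?thesis by simp
  next
    case False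
    then have "W \<in> ZZ" using that Z(1) unfolding ZZ_def by auto
    then show ?thesis using KW[of W] dpos[of W] unfolding r_def by (simp add: pos_le_divide_eq)
  qed
  have sp: "finite (set_pow G A n) \<and> set_pow G A n \<subseteq> carrier G" for n
  proof (induction n)
    case 0 then show ?case by simp
  next
    case (Suc n)
    have "set_pow G A (Suc n) \<subseteq> (\<lambda>(a, b). a \<otimes>\<^bsub>G\<^esub> b) ` (set_pow G A n \<times> A)" by force
    then have "finite (set_pow G A (Suc n))" using Suc assms(5) by (meson finite_SigmaI finite_imageI finite_subset)
    moreover have "set_pow G A (Suc n) \<subseteq> carrier G" using Suc assms(7) by auto
    ultimately show ?case by blast
  qed
  have main: "real (vs.dim (act_span scale \<rho> (set_pow G A n) Z)) \<le> K ^ n * real (vs.dim Z)" for n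
  proof (induction n)
    case 0
    have "act_span scale \<rho> {\<one>\<^bsub>G\<^esub>} Z = \<rho> \<one>\<^bsub>G\<^esub> ` Z" using pt.as_single[OF cg.one_closed Zs] .
    also have "\<dots> = Z" using pt.rho_one by simp
    finally show ?case by simp
  next
    case (Suc n)
    have "real (vs.dim (act_span scale \<rho> (set_pow G A (Suc n)) Z))
        \<le> K * real (vs.dim (act_span scale \<rho> (set_pow G A n) Z))"
      unfolding set_pow.simps
      by (rule pt.petridis[OF assms(7) Zs K0 KZ Kmin]) (use sp in auto)
    also have "\<dots> \<le> K * (K ^ n * real (vs.dim Z))" using Suc K0 by (rule mult_left_mono)
    finally show ?case by simp
  qed
  show ?thesis
  proof (intro exI conjI allI impI)
    show "vs.subspace Z" by (rule Zs)
    show "Z \<subseteq> vs.span Y" "Z \<noteq> {0}" using Z(1) unfolding ZZ_def by auto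
    fix n :: nat
    have "K ^ n \<le> \<alpha> ^ n" by (rule power_mono[OF Ka K0])
    then have "K ^ n * real (vs.dim Z) \<le> \<alpha> ^ n * real (vs.dim Z)" by (rule mult_right_mono) simp
    then show "real (vs.dim (act_span scale \<rho> (set_pow G A n) Z)) \<le> \<alpha> ^ n * real (vs.dim Z)"
      using main[of n] by linarith
  qed
qed

end
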